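(* Let $f:\mathbb{R}^d\to\mathbb{R}$, let $h:\mathbb{R}^d\to\mathbb{R}\cup\{+\infty\}$, and let $g:\mathbb{R}^d\to\mathbb{R}$ be $l$-Lipschitz continuous. Let $\lambda>0$, and suppose that for every $w$ the minimum of $x\mapsto\frac{1}{2\lambda}\|w-x\|_2^2+g(x)$ is attained; let $e_\lambda g(w)=\min_x\left(\frac{1}{2\lambda}\|w-x\|_2^2+g(x)\right)$. Let $\Phi=f+g+h$ and $\tilde\Phi_\lambda=f+e_\lambda g+h$. Let $w^*$ be a global minimizer of $\Phi$ and $w^*_\lambda$ a global minimizer of $\tilde\Phi_\lambda$. Then for all $w$ (with $\Phi(w)$ finite), $$\tilde\Phi_\lambda(w)-\tilde\Phi_\lambda(w^*_\lambda)\le\Phi(w)-\Phi(w^* )+\frac{l^2\lambda}{2}.$$ *)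

theory Defs
  imports "HOL-Analysis.Analysis" "HOL-Library.Extended_Real"
begin

text \<open>Moreau envelope e_lam g (w) = inf over x of (1/(2 lam)) norm(w - x)^2 + g x;
  under the attainment hypothesis of the theorem this infimum is a minimum.\<close>
definition moreau_env :: "real \<Rightarrow> ('a::real_normed_vector \<Rightarrow> real) \<Rightarrow> 'a \<Rightarrow> real" where
  "moreau_env lam g w = (INF x. (norm (w - x))\<^sup>2 / (2 * lam) + g x)"

end

theory Submission
  imports Defs
begin

lemma env_bounds:
  fixes g :: "'a::euclidean_space \<Rightarrow> real"
  assumes lip: "lipschitz_on l UNIV g" and lam_pos: "lam > 0"
    and attained: "\<And>w. \<exists>x. \<forall>y. (norm (w - x))\<^sup>2 / (2 * lam) + g x \<le> (norm (w - y))\<^sup>2 / (2 * lam) + g y"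
  shows "moreau_env lam g w \<le> g w" "g w - l\<^sup>2 * lam / 2 \<le> moreau_env lam g w"
proof -
  obtain x where x: "\<And>y. (norm (w - x))\<^sup>2 / (2 * lam) + g x \<le> (norm (w - y))\<^sup>2 / (2 * lam) + g y"
    using attained by blast
  have bdd: "bdd_below (range (\<lambda>y. (norm (w - y))\<^sup>2 / (2 * lam) + g y))"
    using x by (intro bdd_belowI2) auto
  have eq: "moreau_env lam g w = (norm (w - x))\<^sup>2 / (2 * lam) + g x"
    unfolding moreau_env_def
    by (rule antisym, rule cINF_lower[OF bdd], simp, rule cINF_greatest, simp, rule x)
  show "moreau_env lam g w \<le> g w"
    unfolding eq using x[of w] by simp
  have l0: "l \<ge> 0" using lip by (simp add: lipschitz_on_def)
  have "\<bar>g w - g x\<bar> \<le> l * norm (w - x)"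
    using lip by (auto simp: lipschitz_on_def dist_norm abs_minus_commute)
  moreover have "l * norm (w - x) \<le> (norm (w - x))\<^sup>2 / (2 * lam) + l\<^sup>2 * lam / 2"
  proof -
    have "0 \<le> (norm (w - x) - l * lam)\<^sup>2 / (2 * lam)" using lam_pos by simp
    also have "\<dots> = (norm (w - x))\<^sup>2 / (2 * lam) + l\<^sup>2 * lam / 2 - l * norm (w - x)"
      using lam_pos by (simp add: field_simps power2_eq_square)
    finally show ?thesis by simp
  qed
  ultimately show "g w - l\<^sup>2 * lam / 2 \<le> moreau_env lam g w"
    unfolding eq by linarith
qed

theorem mainTheorem4:
  fixes f g :: "'a::euclidean_space \<Rightarrow> real"
    and h :: "'a \<Rightarrow> ereal"
    and l lam :: real
    and wstar wstar_lam w :: 'a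
  assumes h_range: "\<And>x. h x \<noteq> -\<infinity>"
    and lip: "lipschitz_on l UNIV g"
    and lam_pos: "lam > 0"
    and attained: "\<And>w. \<exists>x. \<forall>y. (norm (w - x))\<^sup>2 / (2 * lam) + g x \<le> (norm (w - y))\<^sup>2 / (2 * lam) + g y"
    and wstar_min: "\<And>v. ereal (f wstar + g wstar) + h wstar \<le> ereal (f v + g v) + h v"
    and wstar_lam_min: "\<And>v. ereal (f wstar_lam + moreau_env lam g wstar_lam) + h wstar_lam
                              \<le> ereal (f v + moreau_env lam g v) + h v"
    and w_fin: "ereal (f w + g w) + h w \<noteq> \<infinity>"
  shows "(ereal (f w + moreau_env lam g w) + h w) - (ereal (f wstar_lam + moreau_env lam g wstar_lam) + h wstar_lam)
         \<le> (ereal (f w + g w) + h w) - (ereal (f wstar + g wstar) + h wstar) + ereal (l\<^sup>2 * lam / 2)"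
proof -
  note B = env_bounds[OF lip lam_pos attained]
  obtain a where a: "h w = ereal a" using w_fin h_range by (cases "h w") auto
  have "ereal (f wstar + g wstar) + h wstar \<noteq> \<infinity>"
    using wstar_min[of w] w_fin by auto
  then obtain b where b: "h wstar = ereal b" using h_range by (cases "h wstar") auto
  have "ereal (f wstar_lam + moreau_env lam g wstar_lam) + h wstar_lam \<noteq> \<infinity>"
    using wstar_lam_min[of w] a by auto
  then obtain c where c: "h wstar_lam = ereal c" using h_range by (cases "h wstar_lam") auto
  have m1: "f wstar + g wstar + b \<le> f wstar_lam + g wstar_lam + c"
    using wstar_min[of wstar_lam] b c by simp
  have m2: "f wstar_lam + moreau_env lam g wstar_lam + c \<le> f w + moreau_env lam g w + a"
    using wstar_lam_min[of w] a c by simp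
  have "f w + moreau_env lam g w + a - (f wstar_lam + moreau_env lam g wstar_lam + c)
     \<le> f w + g w + a - (f wstar + g wstar + b) + l\<^sup>2 * lam / 2"
    using m1 B(1)[of w] B(2)[of wstar_lam] by linarith
  then show ?thesis using a b c by simp
qed

end
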